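(* Let $\mathcal X=[0,1]^t$ with $d(x,y)=\|x-y\|_\infty$, let $\mathcal C=[1/4,3/4]^t$, and let $0<\epsilon<1/64$. Suppose that for some integer $k\ge1$ there is a panel decision function $\widetilde q:\mathcal X^k\to\mathcal C$ such that for every facility location instance $\langle\mathcal X,\mathcal C,d,(x_1,\dots,x_n)\rangle$ (with $n\ge k$), $$\mathbb E_{S\sim\mathcal U_{k,n}}\big[\textsc{Social-Cost}(\widetilde q(S))\big]\le(1+\epsilon)\cdot\textsc{Social-Opt}.$$ Then $k\ge c\,t/\epsilon^2$ for an absolute constant $c>0$ (i.e., $k=\Omega((1/\epsilon)^2 t)$).
   Context: For agent locations $x_1,\dots,x_n\in\mathcal X$, $\textsc{Social-Cost}(q)=\frac1n\sum_{i=1}^n d(q,x_i)$ and $\textsc{Social-Opt}=\min_{q\in\mathcal C}\textsc{Social-Cost}(q)$. For a panel $S\subseteq[n]$ of size $k$, $\widetilde q(S)$ denotes $\widetilde q$ applied to the locations $(x_i)_{i\in S}$. $\mathcal U_{k,n}$ is the uniform distribution over size-$k$ subsets of $[n]$. *)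

theory Defs
  imports "HOL-Probability.Probability"
begin

text \<open>Points of R^t are represented as functions nat => real that vanish at
coordinates >= t (t varies inside the statement).\<close>

definition cube :: "nat \<Rightarrow> real \<Rightarrow> real \<Rightarrow> (nat \<Rightarrow> real) set" where
  "cube t a b = {x. (\<forall>i<t. a \<le> x i \<and> x i \<le> b) \<and> (\<forall>i\<ge>t. x i = 0)}"

abbreviation X_space :: "nat \<Rightarrow> (nat \<Rightarrow> real) set" where
  "X_space t \<equiv> cube t 0 1"

abbreviation C_space :: "nat \<Rightarrow> (nat \<Rightarrow> real) set" where
  "C_space t \<equiv> cube t (1/4) (3/4)"

definition linf_dist :: "nat \<Rightarrow> (nat \<Rightarrow> real) \<Rightarrow> (nat \<Rightarrow> real) \<Rightarrow> real" where
  "linf_dist t x y = Max ((\<lambda>i. \<bar>x i - y i\<bar>) ` {..<t})"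

definition social_cost :: "nat \<Rightarrow> nat \<Rightarrow> (nat \<Rightarrow> nat \<Rightarrow> real) \<Rightarrow> (nat \<Rightarrow> real) \<Rightarrow> real" where
  "social_cost t n x q = (1 / real n) * (\<Sum>i<n. linf_dist t q (x i))"

definition social_opt :: "nat \<Rightarrow> nat \<Rightarrow> (nat \<Rightarrow> nat \<Rightarrow> real) \<Rightarrow> real" where
  "social_opt t n x = (INF q\<in>C_space t. social_cost t n x q)"

definition uniform_panels :: "nat \<Rightarrow> nat \<Rightarrow> nat set pmf" where
  "uniform_panels k n = pmf_of_set {S. S \<subseteq> {..<n} \<and> card S = k}"

definition panel_apply :: "((nat \<Rightarrow> real) list \<Rightarrow> (nat \<Rightarrow> real)) \<Rightarrow> (nat \<Rightarrow> nat \<Rightarrow> real) \<Rightarrow> nat set \<Rightarrow> (nat \<Rightarrow> real)" where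
  "panel_apply q x S = q (map x (sorted_list_of_set S))"

end

theory Submission
  imports Defs
begin


definition pp :: "nat \<Rightarrow> (nat \<Rightarrow> real) \<Rightarrow> (nat \<times> bool) pmf" where
  "pp t r = bind_pmf (pmf_of_set {..<t}) (\<lambda>j. map_pmf (Pair j) (bernoulli_pmf (r j)))"

lemma set_pp: "t \<ge> 1 \<Longrightarrow> set_pmf (pp t r) \<subseteq> {..<t} \<times> UNIV"
proof -
  assume "t \<ge> 1"
  then have "0 \<in> {..<t}" by auto
  then have "{..<t} \<noteq> {}" by blast
  then show ?thesis unfolding pp_def by (auto simp: set_bind_pmf)
qed

lemma pmf_pp:
  assumes "t \<ge> 1" "\<And>j. 0 \<le> r j \<and> r j \<le> 1"
  shows "pmf (pp t r) (j,b) = (if j < t then (if b then r j else 1 - r j) / t else 0)"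
proof -
  have "0 \<in> {..<t}" using assms(1) by auto
  then have fin: "finite {..<t}" "{..<t} \<noteq> {}" by blast+
  have e: "pmf (map_pmf (Pair j') (bernoulli_pmf (r j'))) (j,b) = (if j' = j then pmf (bernoulli_pmf (r j)) b else 0)" for j'
  proof (cases "j' = j")
    case True
    then show ?thesis by (simp add: pmf_map_inj' inj_on_def)
  next
    case False
    then have "(j,b) \<notin> set_pmf (map_pmf (Pair j') (bernoulli_pmf (r j')))" by auto
    then show ?thesis using False by (simp add: pmf_eq_0_set_pmf)
  qed
  have "pmf (pp t r) (j,b) = (\<Sum>j'\<in>{..<t}. (if j' = j then pmf (bernoulli_pmf (r j)) b else 0)) / card {..<t}"
    unfolding pp_def pmf_bind using fin by (simp add: integral_pmf_of_set e)
  also have "\<dots> = (if j < t then pmf (bernoulli_pmf (r j)) b / t else 0)"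
    by (simp add: sum.delta)
  also have "\<dots> = (if j < t then (if b then r j else 1 - r j) / t else 0)"
    using assms(2)[of j] by (cases b) auto
  finally show ?thesis .
qed

lemma exp_pp:
  assumes "t \<ge> 1" "\<And>j. 0 \<le> r j \<and> r j \<le> 1"
  shows "measure_pmf.expectation (pp t r) f =
     (\<Sum>j<t. r j * f (j,True) + (1 - r j) * f (j,False)) / t"
proof -
  have "measure_pmf.expectation (pp t r) f = (\<Sum>y\<in>{..<t} \<times> UNIV. f y * pmf (pp t r) y)"
    using set_pp[OF assms(1)] by (intro integral_measure_pmf_real) auto
  also have "\<dots> = (\<Sum>j<t. \<Sum>b\<in>UNIV. f (j,b) * pmf (pp t r) (j,b))"
    by (simp add: sum.cartesian_product)
  also have "\<dots> = (\<Sum>j<t. (r j * f (j,True) + (1 - r j) * f (j,False)) / t)"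
    using assms by (intro sum.cong) (auto simp: pmf_pp UNIV_bool field_simps)
  also have "\<dots> = (\<Sum>j<t. r j * f (j,True) + (1 - r j) * f (j,False)) / t"
    by (simp add: sum_divide_distrib)
  finally show ?thesis .
qed

lemma pair_exp:
  fixes h :: "'a \<times> 'b \<Rightarrow> real"
  assumes "finite (set_pmf A)" "finite (set_pmf B)"
  shows "measure_pmf.expectation (pair_pmf A B) h =
         measure_pmf.expectation B (\<lambda>b. measure_pmf.expectation A (\<lambda>a. h (a,b)))"
proof -
  have "measure_pmf.expectation (pair_pmf A B) h = (\<Sum>z\<in>set_pmf A \<times> set_pmf B. h z * pmf (pair_pmf A B) z)"
    using assms by (intro integral_measure_pmf_real) auto
  also have "\<dots> = (\<Sum>a\<in>set_pmf A. \<Sum>b\<in>set_pmf B. h (a,b) * pmf A a * pmf B b)"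
    unfolding sum.cartesian_product by (intro sum.cong) (auto simp: pmf_pair mult.assoc)
  also have "\<dots> = (\<Sum>b\<in>set_pmf B. (\<Sum>a\<in>set_pmf A. h (a,b) * pmf A a) * pmf B b)"
    by (subst sum.swap) (simp add: sum_distrib_right)
  also have "\<dots> = measure_pmf.expectation B (\<lambda>b. measure_pmf.expectation A (\<lambda>a. h (a,b)))"
    using assms by (subst integral_measure_pmf_real[of "set_pmf B"]) (auto simp: integral_measure_pmf_real[of "set_pmf A"])
  finally show ?thesis .
qed




definition pt :: "nat \<Rightarrow> nat \<times> bool \<Rightarrow> (nat \<Rightarrow> real)" where
  "pt t y = (\<lambda>i. if i < t then (if i = fst y then (if snd y then 1 else 0) else 1/2) else 0)"

lemma pt_in: "pt t y \<in> X_space t"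
  unfolding cube_def pt_def by auto

lemma linf_nonneg: "t \<ge> 1 \<Longrightarrow> 0 \<le> linf_dist t a b"
  unfolding linf_dist_def
  by (rule order_trans[OF abs_ge_zero[of "a 0 - b 0"]]) (rule Max_ge, auto)

lemma dist_pt:
  assumes "Q \<in> C_space t" "j < t"
  shows "linf_dist t Q (pt t (j,b)) = (if b then 1 - Q j else Q j)"
  unfolding linf_dist_def
proof (rule Max_eqI)
  show "finite ((\<lambda>i. \<bar>Q i - pt t (j, b) i\<bar>) ` {..<t})" by auto
  have qj: "1/4 \<le> Q j" "Q j \<le> 3/4" using assms unfolding cube_def by auto
  show "y \<le> (if b then 1 - Q j else Q j)" if "y \<in> (\<lambda>i. \<bar>Q i - pt t (j, b) i\<bar>) ` {..<t}" for y
  proof -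
    from that obtain i where i: "i < t" "y = \<bar>Q i - pt t (j, b) i\<bar>" by auto
    have qi: "1/4 \<le> Q i" "Q i \<le> 3/4" using assms i unfolding cube_def by auto
    show ?thesis using i qi qj unfolding pt_def by (cases "i = j") auto
  qed
  show "(if b then 1 - Q j else Q j) \<in> (\<lambda>i. \<bar>Q i - pt t (j, b) i\<bar>) ` {..<t}"
    using assms(2) qj by (intro image_eqI[of _ _ j]) (auto simp: pt_def)
qed

definition rr :: "real \<Rightarrow> (nat \<Rightarrow> bool) \<Rightarrow> nat \<Rightarrow> real" where
  "rr \<delta> \<sigma> j = (if \<sigma> j then (1 + \<delta>)/2 else (1 - \<delta>)/2)"

definition PP :: "nat \<Rightarrow> real \<Rightarrow> (nat \<Rightarrow> bool) \<Rightarrow> (nat \<times> bool) pmf" where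
  "PP t \<delta> \<sigma> = pp t (rr \<delta> \<sigma>)"

definition ee :: "bool \<Rightarrow> real \<Rightarrow> real" where
  "ee b v = (if b then 3/4 - v else v - 1/4)"

lemma rr_range: "0 \<le> \<delta> \<Longrightarrow> \<delta> \<le> 1 \<Longrightarrow> 0 \<le> rr \<delta> \<sigma> j \<and> rr \<delta> \<sigma> j \<le> 1"
  unfolding rr_def by auto

lemma costP:
  assumes "t \<ge> 1" "0 \<le> \<delta>" "\<delta> \<le> 1" "Q \<in> C_space t"
  shows "measure_pmf.expectation (PP t \<delta> \<sigma>) (\<lambda>y. linf_dist t Q (pt t y)) =
         (1/2 - \<delta>/4) + \<delta> / t * (\<Sum>j<t. ee (\<sigma> j) (Q j))"
proof -
  have "measure_pmf.expectation (PP t \<delta> \<sigma>) (\<lambda>y. linf_dist t Q (pt t y)) =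
     (\<Sum>j<t. rr \<delta> \<sigma> j * linf_dist t Q (pt t (j,True)) + (1 - rr \<delta> \<sigma> j) * linf_dist t Q (pt t (j,False))) / t"
    unfolding PP_def using assms by (intro exp_pp rr_range) auto
  also have "\<dots> = (\<Sum>j<t. (1/2 - \<delta>/4) + \<delta> * ee (\<sigma> j) (Q j)) / t"
    using assms by (intro arg_cong[where f="\<lambda>x. x / t"] sum.cong) (auto simp: dist_pt rr_def ee_def field_simps)
  also have "\<dots> = (1/2 - \<delta>/4) + \<delta> / t * (\<Sum>j<t. ee (\<sigma> j) (Q j))"
  proof -
    have "(\<Sum>j<t. (1/2 - \<delta>/4) + \<delta> * ee (\<sigma> j) (Q j)) = t * (1/2 - \<delta>/4) + \<delta> * (\<Sum>j<t. ee (\<sigma> j) (Q j))"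
      by (simp add: sum.distrib sum_distrib_left)
    then show ?thesis using assms by (simp add: field_simps)
  qed
  finally show ?thesis .
qed

lemma ee_nonneg: "1/4 \<le> v \<Longrightarrow> v \<le> 3/4 \<Longrightarrow> 0 \<le> ee b v"
  unfolding ee_def by auto

lemma ee_sum: "ee b v + ee (\<not> b) v = 1/2"
  unfolding ee_def by auto

lemma finite_set_PP: "t \<ge> 1 \<Longrightarrow> finite (set_pmf (PP t \<delta> \<sigma>))"
  unfolding PP_def using set_pp by (rule finite_subset) auto

lemma set_Pi_sub:
  assumes "finite A" "t \<ge> 1"
  shows "set_pmf (Pi_pmf A d (\<lambda>_. PP t \<delta> \<sigma>)) \<subseteq> PiE_dflt A d (\<lambda>_. {..<t} \<times> (UNIV::bool set))"
proof -
  have "set_pmf (Pi_pmf A d (\<lambda>_. PP t \<delta> \<sigma>)) \<subseteq> PiE_dflt A d (set_pmf \<circ> (\<lambda>_. PP t \<delta> \<sigma>))"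
    by (rule set_Pi_pmf_subset'[OF assms(1)])
  also have "\<dots> \<subseteq> PiE_dflt A d (\<lambda>_. {..<t} \<times> (UNIV::bool set))"
    using set_pp[OF assms(2)] unfolding PP_def PiE_dflt_def by auto
  finally show ?thesis .
qed

lemma finite_set_Pi:
  assumes "finite A" "t \<ge> 1"
  shows "finite (set_pmf (Pi_pmf A d (\<lambda>_. PP t \<delta> \<sigma>)))"
  by (rule finite_subset[OF set_Pi_sub[OF assms]]) (use assms(1) in auto)

lemma indep:
  fixes h :: "'c \<Rightarrow> 'b \<Rightarrow> real"
  assumes "finite I" "S \<subseteq> I" "i \<in> I" "i \<notin> S" "finite (set_pmf p)"
    and g: "\<And>x x'. (\<forall>l\<in>S. x l = x' l) \<Longrightarrow> g x = g x'"
  shows "measure_pmf.expectation (Pi_pmf I d (\<lambda>_. p)) (\<lambda>x. h (g x) (x i)) =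
         measure_pmf.expectation (Pi_pmf S d (\<lambda>_. p)) (\<lambda>f. measure_pmf.expectation p (\<lambda>y. h (g f) y))"
proof -
  have fS: "finite S" using assms finite_subset by blast
  let ?r = "\<lambda>f x. if x \<in> insert i S then f x else d"
  have "measure_pmf.expectation (Pi_pmf I d (\<lambda>_. p)) (\<lambda>x. h (g x) (x i)) =
        measure_pmf.expectation (Pi_pmf I d (\<lambda>_. p)) (\<lambda>x. h (g (?r x)) (?r x i))"
  proof -
    have "g (?r x) = g x" for x by (rule g) auto
    then show ?thesis by simp
  qed
  also have "\<dots> = measure_pmf.expectation (map_pmf ?r (Pi_pmf I d (\<lambda>_. p))) (\<lambda>x. h (g x) (x i))"
    by simp
  also have "map_pmf ?r (Pi_pmf I d (\<lambda>_. p)) = Pi_pmf (insert i S) d (\<lambda>_. p)"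
    using assms by (intro Pi_pmf_subset[symmetric]) auto
  also have "\<dots> = map_pmf (\<lambda>(y,f). f(i:=y)) (pair_pmf p (Pi_pmf S d (\<lambda>_. p)))"
    using assms fS by (intro Pi_pmf_insert) auto
  also have "measure_pmf.expectation \<dots> (\<lambda>x. h (g x) (x i)) =
     measure_pmf.expectation (pair_pmf p (Pi_pmf S d (\<lambda>_. p))) (\<lambda>z. h (g (snd z)) (fst z))"
  proof -
    have "g ((snd z)(i := fst z)) = g (snd z)" for z using assms(4) by (intro g) auto
    then show ?thesis by (simp add: case_prod_unfold)
  qed
  also have "\<dots> = measure_pmf.expectation (Pi_pmf S d (\<lambda>_. p)) (\<lambda>f. measure_pmf.expectation p (\<lambda>y. h (g f) y))"
  proof (rule pair_exp[of p "Pi_pmf S d (\<lambda>_. p)" "\<lambda>z. h (g (snd z)) (fst z)", simplified])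
    show "finite (set_pmf p)" by fact
    show "finite (set_pmf (Pi_pmf S d (\<lambda>_. p)))"
      by (rule finite_subset[OF set_Pi_pmf_subset'[OF fS]]) (use fS assms(5) in auto)
  qed
  finally show ?thesis .
qed




lemma prod_sqrt: "(\<Prod>i\<in>S. sqrt (a i)) = sqrt (\<Prod>i\<in>S. a i)"
  by (induct S rule: infinite_finite_induct) (auto simp: real_sqrt_mult)

lemma mul_sqrt_div:
  assumes "0 \<le> p" "0 \<le> p'" shows "p * sqrt (p' / p) = sqrt (p * p')"
proof (cases "p = 0")
  case False
  then have "sqrt (p * p') = sqrt ((p * p) * (p' / p))" by simp
  also have "\<dots> = sqrt (p * p) * sqrt (p' / p)" by (rule real_sqrt_mult)
  also have "sqrt (p * p) = p" using assms(1) by simp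
  finally show ?thesis by simp
next
  case True
  then show ?thesis by simp
qed

lemma overlap_CS:
  fixes a b :: "'a \<Rightarrow> real"
  assumes "finite F" "\<And>f. 0 \<le> a f" "\<And>f. 0 \<le> b f" "sum a F \<le> 1" "sum b F \<le> 1"
  shows "(\<Sum>f\<in>F. sqrt (a f * b f))\<^sup>2 \<le> 2 * (\<Sum>f\<in>F. min (a f) (b f))"
proof -
  have e: "sqrt (a f * b f) = sqrt (min (a f) (b f)) * sqrt (max (a f) (b f))" for f
    by (simp add: real_sqrt_mult[symmetric] min_def max_def mult.commute)
  have "(\<Sum>f\<in>F. sqrt (a f * b f))\<^sup>2 \<le> (\<Sum>f\<in>F. (sqrt (min (a f) (b f)))\<^sup>2) * (\<Sum>f\<in>F. (sqrt (max (a f) (b f)))\<^sup>2)"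
    unfolding e by (rule Cauchy_Schwarz_ineq_sum)
  also have "\<dots> = (\<Sum>f\<in>F. min (a f) (b f)) * (\<Sum>f\<in>F. max (a f) (b f))"
  proof -
    have "\<And>f. (sqrt (min (a f) (b f)))\<^sup>2 = min (a f) (b f)" "\<And>f. (sqrt (max (a f) (b f)))\<^sup>2 = max (a f) (b f)"
      using assms(2,3) by (auto intro!: real_sqrt_pow2 simp: le_max_iff_disj)
    then show ?thesis by simp
  qed
  also have "\<dots> \<le> (\<Sum>f\<in>F. min (a f) (b f)) * 2"
  proof (rule mult_left_mono)
    have "(\<Sum>f\<in>F. max (a f) (b f)) \<le> (\<Sum>f\<in>F. a f + b f)"
      using assms(2,3) by (intro sum_mono) auto
    also have "\<dots> \<le> 2" using assms(4,5) by (simp add: sum.distrib)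
    finally show "(\<Sum>f\<in>F. max (a f) (b f)) \<le> 2" .
    show "0 \<le> (\<Sum>f\<in>F. min (a f) (b f))" using assms(2,3) by (intro sum_nonneg) auto
  qed
  finally show ?thesis by simp
qed

lemma Pi_BC:
  assumes "finite S" "finite B" "set_pmf p \<subseteq> B" "set_pmf p' \<subseteq> B"
  shows "(\<Sum>f\<in>PiE_dflt S d (\<lambda>_. B). sqrt (pmf (Pi_pmf S d (\<lambda>_. p)) f * pmf (Pi_pmf S d (\<lambda>_. p')) f))
         = (\<Sum>y\<in>B. sqrt (pmf p y * pmf p' y)) ^ card S"
proof -
  define h where "h = (\<lambda>y. sqrt (pmf p' y / pmf p y))"
  let ?F = "PiE_dflt S d (\<lambda>_. B)"
  have finF: "finite ?F" using assms by auto
  have "(\<Sum>f\<in>?F. sqrt (pmf (Pi_pmf S d (\<lambda>_. p)) f * pmf (Pi_pmf S d (\<lambda>_. p')) f))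
       = (\<Sum>f\<in>?F. (\<Prod>i\<in>S. h (f i)) * pmf (Pi_pmf S d (\<lambda>_. p)) f)"
  proof (rule sum.cong)
    fix f assume f: "f \<in> ?F"
    then have out: "\<And>x. x \<notin> S \<Longrightarrow> f x = d" unfolding PiE_dflt_def by auto
    have "sqrt (pmf (Pi_pmf S d (\<lambda>_. p)) f * pmf (Pi_pmf S d (\<lambda>_. p')) f)
        = sqrt (\<Prod>i\<in>S. pmf p (f i) * pmf p' (f i))"
      using assms(1) out by (simp add: pmf_Pi' prod.distrib)
    also have "\<dots> = (\<Prod>i\<in>S. sqrt (pmf p (f i) * pmf p' (f i)))"
      by (simp add: prod_sqrt)
    also have "\<dots> = (\<Prod>i\<in>S. pmf p (f i) * h (f i))"
      unfolding h_def by (intro prod.cong refl mul_sqrt_div[symmetric]) auto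
    also have "\<dots> = (\<Prod>i\<in>S. h (f i)) * pmf (Pi_pmf S d (\<lambda>_. p)) f"
      using assms(1) out by (simp add: pmf_Pi' prod.distrib mult.commute)
    finally show "sqrt (pmf (Pi_pmf S d (\<lambda>_. p)) f * pmf (Pi_pmf S d (\<lambda>_. p')) f)
       = (\<Prod>i\<in>S. h (f i)) * pmf (Pi_pmf S d (\<lambda>_. p)) f" .
  qed simp
  also have "\<dots> = measure_pmf.expectation (Pi_pmf S d (\<lambda>_. p)) (\<lambda>f. \<Prod>i\<in>S. h (f i))"
  proof (rule integral_measure_pmf_real[symmetric])
    show "finite ?F" by fact
    have "set_pmf (Pi_pmf S d (\<lambda>_. p)) \<subseteq> PiE_dflt S d (set_pmf \<circ> (\<lambda>_. p))"
      by (rule set_Pi_pmf_subset'[OF assms(1)])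
    also have "\<dots> \<subseteq> ?F" using assms(3) unfolding PiE_dflt_def by auto
    finally show "\<And>a. a \<in> set_pmf (Pi_pmf S d (\<lambda>_. p)) \<Longrightarrow> (\<Prod>i\<in>S. h (a i)) \<noteq> 0 \<Longrightarrow> a \<in> ?F" by blast
  qed
  also have "\<dots> = (\<Prod>i\<in>S. measure_pmf.expectation p h)"
    using expectation_prod_Pi_pmf[OF assms(1), of "\<lambda>_. p" "\<lambda>_. h" d]
    using assms by (auto simp: h_def integrable_measure_pmf_finite finite_subset cong: prod.cong)
  also have "\<dots> = (measure_pmf.expectation p h) ^ card S" by simp
  also have "measure_pmf.expectation p h = (\<Sum>y\<in>B. h y * pmf p y)"
    using assms by (intro integral_measure_pmf_real) auto
  also have "\<dots> = (\<Sum>y\<in>B. sqrt (pmf p y * pmf p' y))"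
    unfolding h_def by (intro sum.cong refl) (simp add: mul_sqrt_div[symmetric] mult.commute)
  finally show ?thesis .
qed

lemma sqrt_ge_self: "0 \<le> x \<Longrightarrow> x \<le> 1 \<Longrightarrow> x \<le> sqrt x"
  by (rule real_le_rsqrt) (simp add: power2_eq_square mult_left_le_one_le)

lemma BC_bound:
  assumes "t \<ge> 1" "j < t" "0 \<le> \<delta>" "\<delta> \<le> 1"
  shows "(\<Sum>y\<in>{..<t} \<times> (UNIV::bool set). sqrt (pmf (PP t \<delta> \<sigma>) y * pmf (PP t \<delta> (\<sigma>(j := \<not> \<sigma> j))) y))
         \<ge> 1 - \<delta>\<^sup>2 / t"
proof -
  let ?s = "\<sigma>(j := \<not> \<sigma> j)"
  have tp: "real t > 0" using assms by auto
  have tm: "(\<Sum>b\<in>UNIV. sqrt (pmf (PP t \<delta> \<sigma>) (j',b) * pmf (PP t \<delta> ?s) (j',b)))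
         \<ge> 1/t - (if j' = j then \<delta>\<^sup>2/t else 0)" if j': "j' < t" for j'
  proof (cases "j' = j")
    case False
    have "(\<Sum>b\<in>UNIV. sqrt (pmf (PP t \<delta> \<sigma>) (j',b) * pmf (PP t \<delta> ?s) (j',b)))
        = (\<Sum>b\<in>UNIV. pmf (PP t \<delta> \<sigma>) (j',b))"
    proof (intro sum.cong refl)
      fix b
      have "pmf (PP t \<delta> ?s) (j',b) = pmf (PP t \<delta> \<sigma>) (j',b)"
        using False assms by (simp add: PP_def pmf_pp rr_range) (simp add: rr_def)
      then show "sqrt (pmf (PP t \<delta> \<sigma>) (j',b) * pmf (PP t \<delta> ?s) (j',b)) = pmf (PP t \<delta> \<sigma>) (j',b)"
        by simp
    qed
    also have "\<dots> = 1/t"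
      using assms j' by (simp add: UNIV_bool PP_def pmf_pp rr_range add_divide_distrib[symmetric])
    finally show ?thesis using False by simp
  next
    case True
    have pr: "pmf (PP t \<delta> \<sigma>) (j,b) * pmf (PP t \<delta> ?s) (j,b) = (1 - \<delta>\<^sup>2) / (4 * t\<^sup>2)" for b
      using assms by (cases b; cases "\<sigma> j") (auto simp: PP_def pmf_pp rr_range rr_def power2_eq_square field_simps)
    have "(1 - \<delta>\<^sup>2) / (2 * t) \<le> sqrt ((1 - \<delta>\<^sup>2) / (4 * t\<^sup>2))"
    proof (rule real_le_rsqrt)
      have "((1 - \<delta>\<^sup>2) / (2 * t))\<^sup>2 = (1 - \<delta>\<^sup>2) * (1 - \<delta>\<^sup>2) / (4 * t\<^sup>2)"
        by (simp add: power2_eq_square field_simps)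
      also have "\<dots> \<le> (1 - \<delta>\<^sup>2) * 1 / (4 * t\<^sup>2)"
        using assms tp by (intro divide_right_mono mult_left_mono) (auto simp: power_le_one)
      finally show "((1 - \<delta>\<^sup>2) / (2 * t))\<^sup>2 \<le> (1 - \<delta>\<^sup>2) / (4 * t\<^sup>2)" by simp
    qed
    then have "(\<Sum>b\<in>UNIV. sqrt (pmf (PP t \<delta> \<sigma>) (j',b) * pmf (PP t \<delta> ?s) (j',b))) \<ge> 2 * ((1 - \<delta>\<^sup>2) / (2 * t))"
    proof -
      assume h: "(1 - \<delta>\<^sup>2) / (2 * t) \<le> sqrt ((1 - \<delta>\<^sup>2) / (4 * t\<^sup>2))"
      have "(\<Sum>b\<in>UNIV. sqrt (pmf (PP t \<delta> \<sigma>) (j',b) * pmf (PP t \<delta> ?s) (j',b))) = 2 * sqrt ((1 - \<delta>\<^sup>2) / (4 * t\<^sup>2))"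
        using True by (simp add: UNIV_bool pr)
      then show ?thesis using h by linarith
    qed
    then show ?thesis using True tp by (simp add: field_simps)
  qed
  have "(\<Sum>y\<in>{..<t} \<times> (UNIV::bool set). sqrt (pmf (PP t \<delta> \<sigma>) y * pmf (PP t \<delta> ?s) y))
      = (\<Sum>j'<t. \<Sum>b\<in>UNIV. sqrt (pmf (PP t \<delta> \<sigma>) (j',b) * pmf (PP t \<delta> ?s) (j',b)))"
    by (simp add: sum.cartesian_product)
  also have "\<dots> \<ge> (\<Sum>j'<t. 1/t - (if j' = j then \<delta>\<^sup>2/t else 0))"
    using tm by (intro sum_mono) auto
  also have "(\<Sum>j'<t. 1/t - (if j' = j then \<delta>\<^sup>2/t else 0)) = 1 - \<delta>\<^sup>2 / t"
    using assms tp by (simp add: sum_subtractf)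
  finally show ?thesis .
qed




definition Sig :: "nat \<Rightarrow> (nat \<Rightarrow> bool) set" where
  "Sig t = {\<sigma>. \<forall>i. t \<le> i \<longrightarrow> \<not> \<sigma> i}"

lemma finite_Sig: "finite (Sig t)"
proof -
  have "Sig t \<subseteq> (\<lambda>X i. i \<in> X) ` Pow {..<t}"
  proof
    fix \<sigma> assume "\<sigma> \<in> Sig t"
    then have "{i. \<sigma> i} \<in> Pow {..<t}" unfolding Sig_def by (auto simp: not_le[symmetric])
    moreover have "\<sigma> = (\<lambda>i. i \<in> {i. \<sigma> i})" by simp
    ultimately show "\<sigma> \<in> (\<lambda>X i. i \<in> X) ` Pow {..<t}" by blast
  qed
  then show ?thesis by (rule finite_subset) auto
qed

lemma Sig_ne: "(\<lambda>_. False) \<in> Sig t"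
  unfolding Sig_def by auto

lemma card_Sig_pos: "card (Sig t) > 0"
  using finite_Sig Sig_ne by (auto simp: card_gt_0_iff)

lemma overlap:
  fixes \<delta> :: real
  assumes t: "t \<ge> 1" "j < t" "0 \<le> \<delta>" "\<delta> \<le> 1" and S: "finite S" "real (card S) * \<delta>\<^sup>2 / t \<le> 1/2"
  shows "(\<Sum>f\<in>PiE_dflt S d (\<lambda>_. {..<t} \<times> (UNIV::bool set)).
           min (pmf (Pi_pmf S d (\<lambda>_. PP t \<delta> \<sigma>)) f) (pmf (Pi_pmf S d (\<lambda>_. PP t \<delta> (\<sigma>(j := \<not> \<sigma> j)))) f)) \<ge> 1/8"
proof -
  let ?T = "{..<t} \<times> (UNIV::bool set)"
  let ?F = "PiE_dflt S d (\<lambda>_. ?T)"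
  let ?a = "pmf (Pi_pmf S d (\<lambda>_. PP t \<delta> \<sigma>))"
  let ?b = "pmf (Pi_pmf S d (\<lambda>_. PP t \<delta> (\<sigma>(j := \<not> \<sigma> j))))"
  have finF: "finite ?F" using S by auto
  have sa: "sum ?a ?F = 1" by (rule sum_pmf_eq_1[OF finF set_Pi_sub[OF S(1) t(1)]])
  have sb: "sum ?b ?F = 1" by (rule sum_pmf_eq_1[OF finF set_Pi_sub[OF S(1) t(1)]])
  let ?BC = "(\<Sum>y\<in>?T. sqrt (pmf (PP t \<delta> \<sigma>) y * pmf (PP t \<delta> (\<sigma>(j := \<not> \<sigma> j))) y))"
  have eq: "(\<Sum>f\<in>?F. sqrt (?a f * ?b f)) = ?BC ^ card S"
    by (rule Pi_BC) (use S t set_pp[OF t(1)] in \<open>auto simp: PP_def\<close>)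
  have tp: "real t \<ge> 1" using t by auto
  have d2: "\<delta>\<^sup>2 \<le> 1" using t by (simp add: power_le_one)
  have "\<delta>\<^sup>2 / t \<le> \<delta>\<^sup>2" using tp by (simp add: divide_le_eq mult_le_cancel_left1 order_trans[OF _ mult_right_mono[of 1 t]])
  then have x: "-1 \<le> - (\<delta>\<^sup>2 / t)" using d2 by linarith
  have bc: "1 + (- (\<delta>\<^sup>2 / t)) \<le> ?BC" using BC_bound[OF t] by simp
  have "1 + real (card S) * (- (\<delta>\<^sup>2 / t)) \<le> (1 + (- (\<delta>\<^sup>2 / t))) ^ card S"
    by (rule Bernoulli_inequality[OF x])
  also have "\<dots> \<le> ?BC ^ card S"
    using bc x by (intro power_mono) auto
  finally have h: "1 + real (card S) * (- (\<delta>\<^sup>2 / t)) \<le> ?BC ^ card S" .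
  have "real (card S) * (- (\<delta>\<^sup>2 / t)) = - (real (card S) * \<delta>\<^sup>2 / t)" by simp
  then have "1/2 \<le> ?BC ^ card S" using h S(2) by linarith
  then have "(1/2)\<^sup>2 \<le> (\<Sum>f\<in>?F. sqrt (?a f * ?b f))\<^sup>2" unfolding eq
    by (intro power_mono) auto
  also have "\<dots> \<le> 2 * (\<Sum>f\<in>?F. min (?a f) (?b f))"
    by (rule overlap_CS) (use finF sa sb in auto)
  finally have "(1/2)\<^sup>2 \<le> 2 * (\<Sum>f\<in>?F. min (?a f) (?b f))" .
  then show ?thesis by (simp add: power2_eq_square)
qed

lemma pair_bound:
  fixes \<delta> :: real
  assumes t: "t \<ge> 1" "j < t" "0 \<le> \<delta>" "\<delta> \<le> 1" and S: "finite S" "real (card S) * \<delta>\<^sup>2 / t \<le> 1/2"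
    and G: "\<And>f. G f \<in> C_space t"
  shows "measure_pmf.expectation (Pi_pmf S d (\<lambda>_. PP t \<delta> \<sigma>)) (\<lambda>f. ee (\<sigma> j) (G f j))
       + measure_pmf.expectation (Pi_pmf S d (\<lambda>_. PP t \<delta> (\<sigma>(j := \<not> \<sigma> j)))) (\<lambda>f. ee ((\<sigma>(j := \<not> \<sigma> j)) j) (G f j))
       \<ge> 1/16"
proof -
  let ?T = "{..<t} \<times> (UNIV::bool set)"
  let ?F = "PiE_dflt S d (\<lambda>_. ?T)"
  let ?a = "pmf (Pi_pmf S d (\<lambda>_. PP t \<delta> \<sigma>))"
  let ?b = "pmf (Pi_pmf S d (\<lambda>_. PP t \<delta> (\<sigma>(j := \<not> \<sigma> j))))"
  have finF: "finite ?F" using S by auto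
  have Gj: "1/4 \<le> G f j" "G f j \<le> 3/4" for f using G[of f] t unfolding cube_def by auto
  have "measure_pmf.expectation (Pi_pmf S d (\<lambda>_. PP t \<delta> \<sigma>)) (\<lambda>f. ee (\<sigma> j) (G f j))
      = (\<Sum>f\<in>?F. ee (\<sigma> j) (G f j) * ?a f)"
    by (rule integral_measure_pmf_real[OF finF]) (use set_Pi_sub[OF S(1) t(1)] in blast)
  moreover have "measure_pmf.expectation (Pi_pmf S d (\<lambda>_. PP t \<delta> (\<sigma>(j := \<not> \<sigma> j)))) (\<lambda>f. ee ((\<sigma>(j := \<not> \<sigma> j)) j) (G f j))
      = (\<Sum>f\<in>?F. ee (\<not> \<sigma> j) (G f j) * ?b f)"
    by (subst integral_measure_pmf_real[OF finF]) (use set_Pi_sub[OF S(1) t(1), where d=d and \<sigma>="\<sigma>(j := \<not> \<sigma> j)" and \<delta>=\<delta>] in auto)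
  moreover have "(\<Sum>f\<in>?F. ee (\<sigma> j) (G f j) * ?a f) + (\<Sum>f\<in>?F. ee (\<not> \<sigma> j) (G f j) * ?b f)
      \<ge> (\<Sum>f\<in>?F. min (?a f) (?b f) / 2)"
    unfolding sum.distrib[symmetric]
  proof (rule sum_mono)
    fix f
    have e1: "0 \<le> ee (\<sigma> j) (G f j)" "0 \<le> ee (\<not> \<sigma> j) (G f j)" using Gj by (auto intro: ee_nonneg)
    have "min (?a f) (?b f) / 2 = min (?a f) (?b f) * (ee (\<sigma> j) (G f j) + ee (\<not> \<sigma> j) (G f j))"
      by (simp add: ee_sum)
    also have "\<dots> \<le> ee (\<sigma> j) (G f j) * ?a f + ee (\<not> \<sigma> j) (G f j) * ?b f"
    proof -
      have "min (?a f) (?b f) * ee (\<sigma> j) (G f j) \<le> ee (\<sigma> j) (G f j) * ?a f"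
        using e1 by (simp add: mult.commute mult_left_mono)
      moreover have "min (?a f) (?b f) * ee (\<not> \<sigma> j) (G f j) \<le> ee (\<not> \<sigma> j) (G f j) * ?b f"
        using e1 by (simp add: mult.commute mult_left_mono)
      ultimately show ?thesis by (simp add: distrib_left)
    qed
    finally show "min (?a f) (?b f) / 2 \<le> ee (\<sigma> j) (G f j) * ?a f + ee (\<not> \<sigma> j) (G f j) * ?b f" .
  qed
  moreover have "(\<Sum>f\<in>?F. min (?a f) (?b f) / 2) \<ge> 1/16"
    using overlap[OF t S, of d \<sigma>] by (simp add: sum_divide_distrib[symmetric])
  ultimately show ?thesis by linarith
qed

lemma assouad:
  fixes \<delta> :: real
  assumes t: "t \<ge> 1" "j < t" "0 \<le> \<delta>" "\<delta> \<le> 1" and S: "finite S" "real (card S) * \<delta>\<^sup>2 / t \<le> 1/2"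
    and G: "\<And>f. G f \<in> C_space t"
  shows "(\<Sum>\<sigma>\<in>Sig t. measure_pmf.expectation (Pi_pmf S d (\<lambda>_. PP t \<delta> \<sigma>)) (\<lambda>f. ee (\<sigma> j) (G f j)))
          \<ge> card (Sig t) / 32"
proof -
  define A where "A \<sigma> = measure_pmf.expectation (Pi_pmf S d (\<lambda>_. PP t \<delta> \<sigma>)) (\<lambda>f. ee (\<sigma> j) (G f j))" for \<sigma>
  define fl where "fl \<sigma> = \<sigma>(j := \<not> \<sigma> j)" for \<sigma>
  have flfl: "fl (fl \<sigma>) = \<sigma>" for \<sigma> unfolding fl_def by auto
  have flS: "fl \<sigma> \<in> Sig t" if "\<sigma> \<in> Sig t" for \<sigma> using that t unfolding fl_def Sig_def by auto
  have bij: "bij_betw fl (Sig t) (Sig t)"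
    by (rule bij_betwI[where g=fl]) (auto simp: flS flfl)
  have "sum A (Sig t) = sum (A \<circ> fl) (Sig t)"
    by (rule sum.reindex_bij_betw[OF bij, symmetric, unfolded comp_def[symmetric]]) 
  then have "2 * sum A (Sig t) = (\<Sum>\<sigma>\<in>Sig t. A \<sigma> + A (fl \<sigma>))"
    by (simp add: sum.distrib)
  also have "\<dots> \<ge> (\<Sum>\<sigma>\<in>Sig t. 1/16)"
    unfolding A_def fl_def by (intro sum_mono pair_bound[OF t S G])
  finally show ?thesis unfolding A_def by simp
qed




definition GG :: "nat \<Rightarrow> ((nat \<Rightarrow> real) list \<Rightarrow> (nat \<Rightarrow> real)) \<Rightarrow> nat set \<Rightarrow> (nat \<Rightarrow> nat \<times> bool) \<Rightarrow> (nat \<Rightarrow> real)" where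
  "GG t q S f = q (map (\<lambda>i. pt t (f i)) (sorted_list_of_set S))"

lemma GG_in:
  assumes "finite S" "card S = k" "\<forall>ys. length ys = k \<longrightarrow> set ys \<subseteq> X_space t \<longrightarrow> q ys \<in> C_space t"
  shows "GG t q S f \<in> C_space t"
  unfolding GG_def
proof (rule assms(3)[rule_format])
  show "length (map (\<lambda>i. pt t (f i)) (sorted_list_of_set S)) = k" using assms(1,2) by simp
  show "set (map (\<lambda>i. pt t (f i)) (sorted_list_of_set S)) \<subseteq> X_space t" by (auto intro!: pt_in)
qed

lemma GG_cong:
  assumes "finite S" "\<forall>l\<in>S. x l = x' l"
  shows "GG t q S x = GG t q S x'"
  unfolding GG_def using assms by (intro arg_cong[where f=q] map_cong) auto

lemma social_cost_nonneg: "t \<ge> 1 \<Longrightarrow> 0 \<le> social_cost t n x Q"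
  unfolding social_cost_def by (intro mult_nonneg_nonneg sum_nonneg linf_nonneg) auto

definition qs :: "nat \<Rightarrow> (nat \<Rightarrow> bool) \<Rightarrow> (nat \<Rightarrow> real)" where
  "qs t \<sigma> = (\<lambda>i. if i < t then (if \<sigma> i then 3/4 else 1/4) else 0)"

lemma qs_in: "qs t \<sigma> \<in> C_space t"
  unfolding qs_def cube_def by auto

lemma costP_GG:
  fixes \<delta> :: real
  assumes t: "t \<ge> 1" "0 \<le> \<delta>" "\<delta> \<le> 1" and S: "finite S" "card S = k"
    and hq: "\<forall>ys. length ys = k \<longrightarrow> set ys \<subseteq> X_space t \<longrightarrow> q ys \<in> C_space t"
  shows "measure_pmf.expectation (Pi_pmf S d (\<lambda>_. PP t \<delta> \<sigma>))
            (\<lambda>f. measure_pmf.expectation (PP t \<delta> \<sigma>) (\<lambda>y. linf_dist t (GG t q S f) (pt t y)))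
        = 1/2 - \<delta>/4 + \<delta> / t * (\<Sum>j<t. measure_pmf.expectation (Pi_pmf S d (\<lambda>_. PP t \<delta> \<sigma>)) (\<lambda>f. ee (\<sigma> j) (GG t q S f j)))"
proof -
  let ?M = "Pi_pmf S d (\<lambda>_. PP t \<delta> \<sigma>)"
  have fin: "finite (set_pmf ?M)" by (rule finite_set_Pi[OF S(1) t(1)])
  have "measure_pmf.expectation ?M (\<lambda>f. measure_pmf.expectation (PP t \<delta> \<sigma>) (\<lambda>y. linf_dist t (GG t q S f) (pt t y)))
      = measure_pmf.expectation ?M (\<lambda>f. (1/2 - \<delta>/4) + \<delta> / t * (\<Sum>j<t. ee (\<sigma> j) (GG t q S f j)))"
    using costP[OF t GG_in[OF S hq]] by simp
  also have "\<dots> = (1/2 - \<delta>/4) + \<delta> / t * (\<Sum>j<t. measure_pmf.expectation ?M (\<lambda>f. ee (\<sigma> j) (GG t q S f j)))"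
    by (simp add: integrable_measure_pmf_finite[OF fin] Bochner_Integration.integral_sum)
  finally show ?thesis .
qed




lemma reduction:
  fixes \<delta> \<epsilon> :: real and q :: "(nat \<Rightarrow> real) list \<Rightarrow> (nat \<Rightarrow> real)"
  assumes t: "t \<ge> 1" "0 \<le> \<delta>" "\<delta> \<le> 1" and eps: "0 \<le> \<epsilon>" and nk: "k \<le> n" "1 \<le> k"
    and hq: "\<forall>ys. length ys = k \<longrightarrow> set ys \<subseteq> X_space t \<longrightarrow> q ys \<in> C_space t"
    and H: "\<forall>x. (\<forall>i<n. x i \<in> X_space t) \<longrightarrow>
          measure_pmf.expectation (uniform_panels k n) (\<lambda>S. social_cost t n x (panel_apply q x S))
          \<le> (1 + \<epsilon>) * social_opt t n x"
  shows "real (n - k) / n * (\<Sum>S\<in>{S. S \<subseteq> {..<n} \<and> card S = k}.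
            measure_pmf.expectation (Pi_pmf S (0,False) (\<lambda>_. PP t \<delta> \<sigma>))
              (\<lambda>f. measure_pmf.expectation (PP t \<delta> \<sigma>) (\<lambda>y. linf_dist t (GG t q S f) (pt t y))))
           / card {S. S \<subseteq> {..<n} \<and> card S = k}
         \<le> (1 + \<epsilon>) * (1/2 - \<delta>/4)"
proof -
  define Pan where "Pan = {S. S \<subseteq> {..<n} \<and> card S = k}"
  define P where "P = PP t \<delta> \<sigma>"
  define \<mu> where "\<mu> = Pi_pmf {..<n} (0::nat,False) (\<lambda>_. P)"
  define X where "X x = (\<lambda>i. pt t (x i))" for x :: "nat \<Rightarrow> nat \<times> bool"
  define E where "E S = measure_pmf.expectation (Pi_pmf S (0,False) (\<lambda>_. P))
              (\<lambda>f. measure_pmf.expectation P (\<lambda>y. linf_dist t (GG t q S f) (pt t y)))" for S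
  have npos: "real n > 0" using nk by auto
  have finPan: "finite Pan" unfolding Pan_def
    by (rule finite_subset[of _ "Pow {..<n}"]) auto
  have kPan: "{..<k} \<in> Pan" using nk unfolding Pan_def by auto
  then have Pan_ne: "Pan \<noteq> {}" by auto
  have cardPan: "real (card Pan) > 0" using finPan Pan_ne by (simp add: card_gt_0_iff)
  have finmu: "finite (set_pmf \<mu>)" unfolding \<mu>_def P_def by (rule finite_set_Pi) (use t in auto)
  have int: "integrable (measure_pmf \<mu>) f" for f :: "_ \<Rightarrow> real"
    by (rule integrable_measure_pmf_finite[OF finmu])
  have finP: "finite (set_pmf P)" unfolding P_def by (rule finite_set_PP[OF t(1)])
  have step1: "(\<Sum>S\<in>Pan. social_cost t n (X x) (GG t q S x)) / card Pan
          \<le> (1 + \<epsilon>) * social_cost t n (X x) (qs t \<sigma>)" for x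
  proof -
    have inX: "\<forall>i<n. X x i \<in> X_space t" unfolding X_def by (auto intro!: pt_in)
    have "measure_pmf.expectation (uniform_panels k n) (\<lambda>S. social_cost t n (X x) (panel_apply q (X x) S))
         = (\<Sum>S\<in>Pan. social_cost t n (X x) (GG t q S x)) / card Pan"
      unfolding uniform_panels_def Pan_def[symmetric]
      using finPan Pan_ne by (simp add: integral_pmf_of_set panel_apply_def GG_def X_def)
    moreover have "social_opt t n (X x) \<le> social_cost t n (X x) (qs t \<sigma>)"
      unfolding social_opt_def
      by (rule cINF_lower[OF _ qs_in]) (auto intro!: bdd_belowI[where m=0] social_cost_nonneg t)
    moreover have "measure_pmf.expectation (uniform_panels k n) (\<lambda>S. social_cost t n (X x) (panel_apply q (X x) S))
         \<le> (1 + \<epsilon>) * social_opt t n (X x)" using H inX by blast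
    moreover have "(1 + \<epsilon>) * social_opt t n (X x) \<le> (1 + \<epsilon>) * social_cost t n (X x) (qs t \<sigma>)"
      using calculation(2) eps by (intro mult_left_mono) auto
    ultimately show ?thesis by linarith
  qed
  have step2: "measure_pmf.expectation \<mu> (\<lambda>x. (\<Sum>S\<in>Pan. social_cost t n (X x) (GG t q S x)) / card Pan)
       \<le> measure_pmf.expectation \<mu> (\<lambda>x. (1 + \<epsilon>) * social_cost t n (X x) (qs t \<sigma>))"
    by (rule integral_mono[OF int int step1])
  have lhs: "measure_pmf.expectation \<mu> (\<lambda>x. (\<Sum>S\<in>Pan. social_cost t n (X x) (GG t q S x)) / card Pan)
      = (\<Sum>S\<in>Pan. measure_pmf.expectation \<mu> (\<lambda>x. social_cost t n (X x) (GG t q S x))) / card Pan"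
    by (simp add: int Bochner_Integration.integral_sum)
  have step3: "measure_pmf.expectation \<mu> (\<lambda>x. social_cost t n (X x) (GG t q S x)) \<ge> real (n - k) / n * E S"
    if S: "S \<in> Pan" for S
  proof -
    have Ssub: "S \<subseteq> {..<n}" and cS: "card S = k" using S unfolding Pan_def by auto
    have finS: "finite S" using Ssub finite_subset by blast
    let ?L = "\<lambda>i. measure_pmf.expectation \<mu> (\<lambda>x. linf_dist t (GG t q S x) (pt t (x i)))"
    have e1: "measure_pmf.expectation \<mu> (\<lambda>x. social_cost t n (X x) (GG t q S x))
        = 1 / n * (\<Sum>i<n. ?L i)"
      unfolding social_cost_def X_def by (simp add: int Bochner_Integration.integral_sum)
    have e2: "(\<Sum>i\<in>{..<n} - S. ?L i) \<le> (\<Sum>i<n. ?L i)"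
      by (rule sum_mono2) (auto intro!: Bochner_Integration.integral_nonneg linf_nonneg t)
    have e3: "(\<Sum>i\<in>{..<n} - S. ?L i) = (\<Sum>i\<in>{..<n} - S. E S)"
    proof (rule sum.cong[OF refl])
      fix i assume i: "i \<in> {..<n} - S"
      show "?L i = E S"
        unfolding \<mu>_def E_def
        by (rule indep[where h="\<lambda>Q y. linf_dist t Q (pt t y)"]) (use i Ssub finP finS in \<open>auto intro: GG_cong\<close>)
    qed
    have e4: "(\<Sum>i\<in>{..<n} - S. E S) = real (n - k) * E S"
      using Ssub cS finS by (simp add: card_Diff_subset)
    have "real (n - k) * E S \<le> (\<Sum>i<n. ?L i)" using e2 e3 e4 by linarith
    then show ?thesis using e1 npos by (simp add: field_simps)
  qed
  have step4: "measure_pmf.expectation \<mu> (\<lambda>x. (1 + \<epsilon>) * social_cost t n (X x) (qs t \<sigma>)) = (1 + \<epsilon>) * (1/2 - \<delta>/4)"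
  proof -
    have c: "measure_pmf.expectation P (\<lambda>y. linf_dist t (qs t \<sigma>) (pt t y)) = 1/2 - \<delta>/4"
    proof -
      have "(\<Sum>j<t. ee (\<sigma> j) (qs t \<sigma> j)) = 0" by (intro sum.neutral) (auto simp: ee_def qs_def)
      then show ?thesis unfolding P_def using costP[OF t qs_in] by simp
    qed
    have "measure_pmf.expectation \<mu> (\<lambda>x. linf_dist t (qs t \<sigma>) (pt t (x i))) = 1/2 - \<delta>/4" if i: "i < n" for i
    proof -
      have "measure_pmf.expectation \<mu> (\<lambda>x. linf_dist t (qs t \<sigma>) (pt t (x i)))
          = measure_pmf.expectation (map_pmf (\<lambda>x. x i) \<mu>) (\<lambda>y. linf_dist t (qs t \<sigma>) (pt t y))"
        by simp
      also have "map_pmf (\<lambda>x. x i) \<mu> = P" unfolding \<mu>_def using i by (subst Pi_pmf_component) auto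
      finally show ?thesis using c by simp
    qed
    then have "measure_pmf.expectation \<mu> (\<lambda>x. social_cost t n (X x) (qs t \<sigma>)) = 1/2 - \<delta>/4"
      unfolding social_cost_def X_def using npos by (simp add: int Bochner_Integration.integral_sum)
    then show ?thesis by simp
  qed
  have "real (n - k) / n * (\<Sum>S\<in>Pan. E S) / card Pan
       = (\<Sum>S\<in>Pan. real (n - k) / n * E S) / card Pan"
    by (simp add: sum_distrib_left)
  also have "\<dots> \<le> (\<Sum>S\<in>Pan. measure_pmf.expectation \<mu> (\<lambda>x. social_cost t n (X x) (GG t q S x))) / card Pan"
    using cardPan by (intro divide_right_mono sum_mono step3) auto
  also have "\<dots> \<le> (1 + \<epsilon>) * (1/2 - \<delta>/4)"
    using step2 unfolding lhs step4 .
  finally show ?thesis unfolding Pan_def E_def P_def .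
qed




lemma final_arith:
  fixes \<epsilon> \<alpha> :: real
  assumes "0 < \<epsilon>" "\<epsilon> < 1/64" "1 - \<epsilon>/4 \<le> \<alpha>"
    and "\<alpha> * (1/2 - 8*\<epsilon> + \<epsilon>) \<le> (1 + \<epsilon>) * (1/2 - 8*\<epsilon>)"
  shows False
proof -
  have p: "0 < 1/2 - 7*\<epsilon>" using assms by linarith
  have "(1 - \<epsilon>/4) * (1/2 - 7*\<epsilon>) \<le> \<alpha> * (1/2 - 7*\<epsilon>)"
    using assms(3) p by (intro mult_right_mono) auto
  also have "\<dots> \<le> (1 + \<epsilon>) * (1/2 - 8*\<epsilon>)" using assms(4) by (simp add: algebra_simps)
  finally have "(1 - \<epsilon>/4) * (1/2 - 7*\<epsilon>) \<le> (1 + \<epsilon>) * (1/2 - 8*\<epsilon>)" .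
  then have "3/8 * \<epsilon> + 39/4 * \<epsilon>^2 \<le> 0" by (simp add: algebra_simps power2_eq_square)
  moreover have "0 < 3/8 * \<epsilon> + 39/4 * \<epsilon>^2" using assms(1) by (simp add: add_pos_nonneg)
  ultimately show False by linarith
qed

theorem theorem4p12:
  shows "\<exists>c::real. c > 0 \<and>
    (\<forall>(t::nat) (k::nat) (\<epsilon>::real) (q :: (nat \<Rightarrow> real) list \<Rightarrow> (nat \<Rightarrow> real)).
       t \<ge> 1 \<longrightarrow> k \<ge> 1 \<longrightarrow> 0 < \<epsilon> \<longrightarrow> \<epsilon> < 1/64 \<longrightarrow>
       (\<forall>ys. length ys = k \<longrightarrow> set ys \<subseteq> X_space t \<longrightarrow> q ys \<in> C_space t) \<longrightarrow>
       (\<forall>(n::nat) (x :: nat \<Rightarrow> nat \<Rightarrow> real). n \<ge> k \<longrightarrow> (\<forall>i<n. x i \<in> X_space t) \<longrightarrow>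
          measure_pmf.expectation (uniform_panels k n)
             (\<lambda>S. social_cost t n x (panel_apply q x S))
          \<le> (1 + \<epsilon>) * social_opt t n x) \<longrightarrow>
       real k \<ge> c * real t / \<epsilon>\<^sup>2)"
proof (rule exI[of _ "1/2048"], intro conjI allI impI)
  show "(0::real) < 1/2048" by simp
  fix t k :: nat and \<epsilon> :: real and q :: "(nat \<Rightarrow> real) list \<Rightarrow> (nat \<Rightarrow> real)"
  assume t1: "t \<ge> 1" and k1: "k \<ge> 1" and e0: "0 < \<epsilon>" and e1: "\<epsilon> < 1/64"
    and hq: "\<forall>ys. length ys = k \<longrightarrow> set ys \<subseteq> X_space t \<longrightarrow> q ys \<in> C_space t"
    and H: "\<forall>(n::nat) (x :: nat \<Rightarrow> nat \<Rightarrow> real). n \<ge> k \<longrightarrow> (\<forall>i<n. x i \<in> X_space t) \<longrightarrow>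
          measure_pmf.expectation (uniform_panels k n)
             (\<lambda>S. social_cost t n x (panel_apply q x S))
          \<le> (1 + \<epsilon>) * social_opt t n x"
  show "real k \<ge> 1/2048 * real t / \<epsilon>\<^sup>2"
  proof (rule ccontr)
    assume "\<not> real k \<ge> 1/2048 * real t / \<epsilon>\<^sup>2"
    then have klt: "real k < 1/2048 * real t / \<epsilon>\<^sup>2" by simp
    define \<delta> where "\<delta> = 32 * \<epsilon>"
    have d0: "0 \<le> \<delta>" "\<delta> \<le> 1" using e0 e1 unfolding \<delta>_def by auto
    have tp: "real t > 0" using t1 by auto
    have kd: "real k * \<delta>\<^sup>2 / t \<le> 1/2"
    proof -
      have "real k * \<epsilon>\<^sup>2 < 1/2048 * real t"
        using klt e0 by (simp add: field_simps)
      then have "real k * \<delta>\<^sup>2 < 1/2 * real t" unfolding \<delta>_def by (simp add: power2_eq_square)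
      then show ?thesis using tp by (simp add: field_simps)
    qed
    define m where "m = nat \<lceil>4 / \<epsilon>\<rceil>"
    have m4: "real m \<ge> 4 / \<epsilon>" unfolding m_def by linarith
    have mpos: "real m > 0" using m4 e0 by (smt (verit) divide_pos_pos)
    then have m1: "m \<ge> 1" by simp
    define n where "n = k * m"
    have nk: "k \<le> n" unfolding n_def using m1 by simp
    define \<alpha> where "\<alpha> = real (n - k) / n"
    have npos: "real n > 0" unfolding n_def using k1 mpos by simp
    have \<alpha>: "1 - \<epsilon>/4 \<le> \<alpha>"
    proof -
      have "\<alpha> = 1 - 1 / m" unfolding \<alpha>_def n_def using nk k1 mpos m1
        by (simp add: of_nat_diff field_simps n_def)
      moreover have "1 / m \<le> \<epsilon> / 4" using m4 e0 mpos by (simp add: field_simps)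
      ultimately show ?thesis by linarith
    qed
    define Pan where "Pan = {S. S \<subseteq> {..<n} \<and> card S = k}"
    have finPan: "finite Pan" unfolding Pan_def
      by (rule finite_subset[of _ "Pow {..<n}"]) auto
    have "{..<k} \<in> Pan" using nk unfolding Pan_def by auto
    then have cardPan: "real (card Pan) > 0" using finPan by (auto simp: card_gt_0_iff)
    define A where "A \<sigma> S j = measure_pmf.expectation (Pi_pmf S (0,False) (\<lambda>_. PP t \<delta> \<sigma>)) (\<lambda>f. ee (\<sigma> j) (GG t q S f j))" for \<sigma> S j
    define B where "B \<sigma> = (\<Sum>S\<in>Pan. \<Sum>j<t. A \<sigma> S j) / card Pan" for \<sigma>
    define OPT where "OPT = 1/2 - \<delta>/4"
    have Hn: "\<forall>x. (\<forall>i<n. x i \<in> X_space t) \<longrightarrow>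
          measure_pmf.expectation (uniform_panels k n) (\<lambda>S. social_cost t n x (panel_apply q x S))
          \<le> (1 + \<epsilon>) * social_opt t n x" using H nk by blast
    have per: "\<alpha> * (\<delta> / t * B \<sigma>) \<le> (1 + \<epsilon>) * OPT - \<alpha> * OPT" for \<sigma>
    proof -
      have r: "\<alpha> * (\<Sum>S\<in>Pan. measure_pmf.expectation (Pi_pmf S (0,False) (\<lambda>_. PP t \<delta> \<sigma>))
              (\<lambda>f. measure_pmf.expectation (PP t \<delta> \<sigma>) (\<lambda>y. linf_dist t (GG t q S f) (pt t y)))) / card Pan
            \<le> (1 + \<epsilon>) * OPT"
        unfolding \<alpha>_def Pan_def OPT_def
        by (rule reduction[OF t1 d0 _ nk k1 hq Hn]) (use e0 in simp)
      have "(\<Sum>S\<in>Pan. measure_pmf.expectation (Pi_pmf S (0,False) (\<lambda>_. PP t \<delta> \<sigma>))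
              (\<lambda>f. measure_pmf.expectation (PP t \<delta> \<sigma>) (\<lambda>y. linf_dist t (GG t q S f) (pt t y))))
          = (\<Sum>S\<in>Pan. OPT + \<delta> / t * (\<Sum>j<t. A \<sigma> S j))"
      proof (rule sum.cong[OF refl])
        fix S assume "S \<in> Pan"
        then have S: "finite S" "card S = k" unfolding Pan_def using finite_subset by auto
        show "measure_pmf.expectation (Pi_pmf S (0,False) (\<lambda>_. PP t \<delta> \<sigma>))
              (\<lambda>f. measure_pmf.expectation (PP t \<delta> \<sigma>) (\<lambda>y. linf_dist t (GG t q S f) (pt t y)))
             = OPT + \<delta> / t * (\<Sum>j<t. A \<sigma> S j)"
          unfolding OPT_def A_def by (rule costP_GG[OF t1 d0 S hq])
      qed
      also have "\<dots> = card Pan * OPT + \<delta> / t * (\<Sum>S\<in>Pan. \<Sum>j<t. A \<sigma> S j)"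
        by (simp add: sum.distrib sum_distrib_left)
      finally have "\<alpha> * (card Pan * OPT + \<delta> / t * (\<Sum>S\<in>Pan. \<Sum>j<t. A \<sigma> S j)) / card Pan \<le> (1 + \<epsilon>) * OPT"
        using r by simp
      moreover have "\<alpha> * (card Pan * OPT + \<delta> / t * (\<Sum>S\<in>Pan. \<Sum>j<t. A \<sigma> S j)) / card Pan
          = \<alpha> * (OPT + \<delta> / t * B \<sigma>)"
        unfolding B_def using cardPan by (simp add: field_simps)
      ultimately have "\<alpha> * (OPT + \<delta> / t * B \<sigma>) \<le> (1 + \<epsilon>) * OPT" by simp
      then show ?thesis by (simp add: algebra_simps)
    qed
    have sumB: "(\<Sum>\<sigma>\<in>Sig t. B \<sigma>) \<ge> t * card (Sig t) / 32"
    proof -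
      have "(\<Sum>\<sigma>\<in>Sig t. B \<sigma>) = (\<Sum>S\<in>Pan. \<Sum>j<t. \<Sum>\<sigma>\<in>Sig t. A \<sigma> S j) / card Pan"
      proof -
        have "(\<Sum>\<sigma>\<in>Sig t. B \<sigma>) = (\<Sum>\<sigma>\<in>Sig t. \<Sum>S\<in>Pan. \<Sum>j<t. A \<sigma> S j) / card Pan"
          unfolding B_def by (rule sum_divide_distrib[symmetric])
        also have "(\<Sum>\<sigma>\<in>Sig t. \<Sum>S\<in>Pan. \<Sum>j<t. A \<sigma> S j) = (\<Sum>S\<in>Pan. \<Sum>\<sigma>\<in>Sig t. \<Sum>j<t. A \<sigma> S j)"
          by (rule sum.swap)
        also have "\<dots> = (\<Sum>S\<in>Pan. \<Sum>j<t. \<Sum>\<sigma>\<in>Sig t. A \<sigma> S j)"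
          by (rule sum.cong[OF refl], rule sum.swap)
        finally show ?thesis .
      qed
      also have "\<dots> \<ge> (\<Sum>S\<in>Pan. \<Sum>j<t. card (Sig t) / 32) / card Pan"
      proof (intro divide_right_mono sum_mono)
        fix S j assume S: "S \<in> Pan" and j: "j \<in> {..<t}"
        then have S': "finite S" "card S = k" unfolding Pan_def using finite_subset by auto
        show "card (Sig t) / 32 \<le> (\<Sum>\<sigma>\<in>Sig t. A \<sigma> S j)"
          unfolding A_def
          by (rule assouad) (use t1 j d0 S' kd GG_in[OF S' hq] in auto)
      qed (use cardPan in auto)
      also have "(\<Sum>S\<in>Pan. \<Sum>j<t. card (Sig t) / 32) / card Pan = t * card (Sig t) / 32"
        using cardPan by simp
      finally show ?thesis .
    qed
    have "\<alpha> * (\<delta> / t * (\<Sum>\<sigma>\<in>Sig t. B \<sigma>)) \<le> card (Sig t) * ((1 + \<epsilon>) * OPT - \<alpha> * OPT)"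
    proof -
      have "\<alpha> * (\<delta> / t * (\<Sum>\<sigma>\<in>Sig t. B \<sigma>)) = (\<Sum>\<sigma>\<in>Sig t. \<alpha> * (\<delta> / t * B \<sigma>))"
        by (simp add: sum_distrib_left)
      also have "\<dots> \<le> (\<Sum>\<sigma>\<in>Sig t. (1 + \<epsilon>) * OPT - \<alpha> * OPT)"
        by (intro sum_mono per)
      finally show ?thesis by simp
    qed
    moreover have "\<alpha> * (\<delta> / t * (t * card (Sig t) / 32)) \<le> \<alpha> * (\<delta> / t * (\<Sum>\<sigma>\<in>Sig t. B \<sigma>))"
    proof -
      have "0 \<le> \<alpha>" using \<alpha> e1 by linarith
      moreover have "0 \<le> \<delta> / t" using d0 tp by simp
      ultimately show ?thesis using sumB by (intro mult_left_mono) auto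
    qed
    moreover have "\<alpha> * (\<delta> / t * (t * card (Sig t) / 32)) = card (Sig t) * (\<alpha> * \<delta> / 32)"
      using tp by (simp add: field_simps)
    ultimately have "card (Sig t) * (\<alpha> * \<delta> / 32) \<le> card (Sig t) * ((1 + \<epsilon>) * OPT - \<alpha> * OPT)"
      by linarith
    then have "\<alpha> * \<delta> / 32 \<le> (1 + \<epsilon>) * OPT - \<alpha> * OPT"
      using card_Sig_pos[of t] by (simp add: mult_le_cancel_left_pos)
    then have "\<alpha> * (1/2 - 8*\<epsilon> + \<epsilon>) \<le> (1 + \<epsilon>) * (1/2 - 8*\<epsilon>)"
    proof -
      assume h: "\<alpha> * \<delta> / 32 \<le> (1 + \<epsilon>) * OPT - \<alpha> * OPT"
      have a: "\<alpha> * \<delta> / 32 = \<alpha> * \<epsilon>" by (simp add: \<delta>_def)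
      have b: "\<alpha> * (1/2 - 8*\<epsilon> + \<epsilon>) = \<alpha> * OPT + \<alpha> * \<epsilon>" by (simp add: OPT_def \<delta>_def algebra_simps)
      have c: "(1 + \<epsilon>) * (1/2 - 8*\<epsilon>) = (1 + \<epsilon>) * OPT" by (simp add: OPT_def \<delta>_def)
      show ?thesis using h a b c by linarith
    qed
    then show False using final_arith[OF e0 e1 \<alpha>] by blast
  qed
qed


end
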